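(* Let $\mathcal{F}:\mathbb{R}^K\to\mathbb{R}^K$ be bijective with $\mathcal{F}$ and $\mathcal{F}^{-1}$ both continuously differentiable. Let $\|\cdot\|$ be an induced matrix norm (with the associated vector norm), and suppose there are constants $\gamma,\zeta,\beta$ such that $\|J(x_1)-J(x_2)\|\le\gamma$, $\|J(x)\|\le\zeta$ and $\|J^{-1}(x)\|\le\beta$ for all $x_1,x_2,x\in\mathbb{R}^K$. Let $y_1,\dots,y_M\in\mathbb{R}^K$ be desired outputs, let $x_1^0,\dots,x_M^0\in\mathbb{R}^K$ be initial inputs, and run Iterative Inversion with affine least-squares regression (as in the context). Suppose that for every iteration $n$: $\|\overline{\mathcal{F}(X^n)}-\mathcal{F}(\overline{X^n})\|\le\lambda$, and $\tilde{J}_n^{-1}=J^{-1}(\overline{X^n})(I+\Delta_n)$ for some matrix $\Delta_n$ with $\|\Delta_n\|\le\delta<1/(\zeta\beta)$. Let $\mu=\frac{\zeta^2\beta\delta}{1-\zeta\beta\delta}$ and assume $\beta(1+\delta)(\gamma+\mu)<1$. Let $\rho=\frac{2\lambda\beta(1+\delta)(\mu+\zeta)}{1-\beta(1+\delta)(\mu+\gamma)}$. Then for every $\epsilon>0$ there exists $k<\infty$ such that $\|\overline{\mathcal{F}(X^k)}-\overline{Y}\|\le\rho+\epsilon$.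
   Context: Vectors are row vectors. $J(x)\in\mathbb{R}^{K\times K}$ denotes the Jacobian of $\mathcal{F}$ at $x$ in the row convention, $\mathcal{F}(x+h)=\mathcal{F}(x)+hJ(x)+o(\|h\|)$, and $J^{-1}(x)=[J(x)]^{-1}$ (the Jacobian of $\mathcal{F}^{-1}$ at $\mathcal{F}(x)$). Iterative Inversion (affine least-squares version): with $X^n=(x_1^n,\dots,x_M^n)^T\in\mathbb{R}^{M\times K}$, $\mathcal{F}(X^n)=(\mathcal{F}(x_1^n),\dots,\mathcal{F}(x_M^n))^T$, row means $\overline{X^n}=\frac1M\sum_i x_i^n$, $\overline{\mathcal{F}(X^n)}=\frac1M\sum_i\mathcal{F}(x_i^n)$, $\overline{Y}=\frac1M\sum_i y_i$, and $\mathbf{1}$ the all-ones column vector of length $M$, set $\Theta_{n+1}=(\mathcal{F}(X^n)-\mathbf{1}\overline{\mathcal{F}(X^n)})^{\dagger}(X^n-\mathbf{1}\overline{X^n})$ and $b_{n+1}=\overline{X^n}-\overline{\mathcal{F}(X^n)}\Theta_{n+1}$ (the minimum-norm least-squares fit of $x\approx \mathcal{F}(x)\Theta+b$ on the pairs $(\mathcal{F}(x_i^n),x_i^n)$; $\dagger$ is the Moore–Penrose pseudoinverse), and $x_i^{n+1}=y_i\Theta_{n+1}+b_{n+1}$. Define $\tilde{J}_n^{-1}=\Theta_{n+1}=(\mathcal{F}(X^n)-\mathbf{1}\overline{\mathcal{F}(X^n)})^{\dagger}(X^n-\mathbf{1}\overline{X^n})$. *)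

theory Defs
  imports "HOL-Analysis.Analysis"
begin

text \<open>Vectors are row vectors in real^'k; a collection of M points is a matrix
  real^'k^'m whose i-th row is the i-th point. Row-vector times matrix is v*.\<close>

definition is_vnorm :: "(real^'k \<Rightarrow> real) \<Rightarrow> bool" where
  "is_vnorm N \<longleftrightarrow> (\<forall>x. 0 \<le> N x) \<and> (\<forall>x. N x = 0 \<longleftrightarrow> x = 0) \<and>
     (\<forall>x y. N (x + y) \<le> N x + N y) \<and> (\<forall>c x. N (c *\<^sub>R x) = \<bar>c\<bar> * N x)"

definition ind_norm :: "(real^'k \<Rightarrow> real) \<Rightarrow> real^'k^'k \<Rightarrow> real" where
  "ind_norm N A = (SUP x\<in>-{0}. N (x v* A) / N x)"

definition pinv :: "real^'k^'m \<Rightarrow> real^'m^'k" where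
  "pinv A = (THE P. A ** P ** A = A \<and> P ** A ** P = P \<and>
      transpose (A ** P) = A ** P \<and> transpose (P ** A) = P ** A)"

definition rowmean :: "real^'k^'m \<Rightarrow> real^'k" where
  "rowmean A = (1 / real CARD('m)) *\<^sub>R (\<Sum>i\<in>UNIV. A $ i)"

definition center :: "real^'k^'m \<Rightarrow> real^'k^'m" where
  "center A = (\<chi> i. A $ i - rowmean A)"

definition mapF :: "(real^'k \<Rightarrow> real^'k) \<Rightarrow> real^'k^'m \<Rightarrow> real^'k^'m" where
  "mapF F A = (\<chi> i. F (A $ i))"

text \<open>Theta_{n+1} = (F(X^n) - 1 mean F(X^n))^dagger (X^n - 1 mean X^n), i.e. tilde J_n^{-1}.\<close>
definition theta :: "(real^'k \<Rightarrow> real^'k) \<Rightarrow> real^'k^'m \<Rightarrow> real^'k^'k" where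
  "theta F A = pinv (center (mapF F A)) ** center A"

definition offset :: "(real^'k \<Rightarrow> real^'k) \<Rightarrow> real^'k^'m \<Rightarrow> real^'k" where
  "offset F A = rowmean A - rowmean (mapF F A) v* theta F A"

definition ii_step :: "(real^'k \<Rightarrow> real^'k) \<Rightarrow> real^'k^'m \<Rightarrow> real^'k^'m \<Rightarrow> real^'k^'m" where
  "ii_step F Y A = (\<chi> i. Y $ i v* theta F A + offset F A)"

end

theory Submission
  imports Defs
begin

lemma vn_zero: "is_vnorm N \<Longrightarrow> N 0 = 0"
  unfolding is_vnorm_def by auto

lemma vn_neg: "is_vnorm N \<Longrightarrow> N (- x) = N x"
  unfolding is_vnorm_def by (metis abs_minus_cancel abs_one mult_1 scaleR_minus1_left)

lemma vn_sub: "is_vnorm N \<Longrightarrow> N (x - y) = N (y - x)"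
  by (metis minus_diff_eq vn_neg)

lemma vn_tri: "is_vnorm N \<Longrightarrow> N (x + y) \<le> N x + N y"
  unfolding is_vnorm_def by auto

lemma vn_nn: "is_vnorm N \<Longrightarrow> 0 \<le> N x"
  unfolding is_vnorm_def by auto

lemma vn_scale: "is_vnorm N \<Longrightarrow> N (c *\<^sub>R x) = \<bar>c\<bar> * N x"
  unfolding is_vnorm_def by auto

lemma vn_pos: "is_vnorm N \<Longrightarrow> x \<noteq> 0 \<Longrightarrow> 0 < N x"
  unfolding is_vnorm_def by (metis order_le_less)

lemma vn_sum: assumes N: "is_vnorm N" and A: "finite A" shows "N (\<Sum>i\<in>A. f i) \<le> (\<Sum>i\<in>A. N (f i))"
  using A
proof (induction A rule: finite_induct)
  case empty then show ?case by (simp add: vn_zero[OF N])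
next
  case (insert a A)
  then show ?case using vn_tri[OF N, of "f a" "sum f A"] by simp
qed

lemma vn_upper:
  fixes N :: "real^'k \<Rightarrow> real"
  assumes N: "is_vnorm N"
  shows "\<exists>C\<ge>0. \<forall>x. N x \<le> C * norm x"
proof -
  define C where "C = (\<Sum>i\<in>UNIV. N (axis i (1::real) :: real^'k))"
  have "C \<ge> 0" unfolding C_def by (rule sum_nonneg) (simp add: vn_nn[OF N])
  moreover have "N x \<le> C * norm x" for x
  proof -
    have "N x = N (\<Sum>i\<in>UNIV. x$i *\<^sub>R axis i 1)"
      using basis_expansion[of x] by (simp add: scalar_mult_eq_scaleR)
    also have "\<dots> \<le> (\<Sum>i\<in>UNIV. N (x$i *\<^sub>R axis i 1))" by (rule vn_sum[OF N]) simp
    also have "\<dots> = (\<Sum>i\<in>UNIV. \<bar>x$i\<bar> * N (axis i 1))" by (simp add: vn_scale[OF N])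
    also have "\<dots> \<le> (\<Sum>i\<in>UNIV. norm x * N (axis i 1))"
      by (rule sum_mono, rule mult_right_mono, rule component_le_norm_cart, rule vn_nn[OF N])
    also have "\<dots> = C * norm x" unfolding C_def by (simp add: sum_distrib_left mult.commute)
    finally show ?thesis .
  qed
  ultimately show ?thesis by blast
qed

lemma vn_cont:
  fixes N :: "real^'k \<Rightarrow> real"
  assumes N: "is_vnorm N"
  shows "continuous_on S N"
proof -
  obtain C where C: "C \<ge> 0" "\<And>x. N x \<le> C * norm x" using vn_upper[OF N] by blast
  have "C-lipschitz_on S N"
  proof (rule lipschitz_onI)
    fix x y
    have "N x \<le> N (x - y) + N y" using vn_tri[OF N, of "x - y" y] by simp
    moreover have "N y \<le> N (y - x) + N x" using vn_tri[OF N, of "y - x" x] by simp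
    ultimately have "\<bar>N x - N y\<bar> \<le> N (x - y)" using vn_sub[OF N, of x y] by linarith
    also have "\<dots> \<le> C * dist x y" using C(2) by (simp add: dist_norm)
    finally show "dist (N x) (N y) \<le> C * dist x y" by (simp add: dist_real_def)
  qed (use C in auto)
  then show ?thesis by (rule lipschitz_on_continuous_on)
qed

lemma vn_lower:
  fixes N :: "real^'k \<Rightarrow> real"
  assumes N: "is_vnorm N"
  shows "\<exists>c>0. \<forall>x. c * norm x \<le> N x"
proof -
  have ne: "sphere (0::real^'k) 1 \<noteq> {}"
    using norm_axis_1[of undefined] mem_sphere_0 by blast
  obtain x0 where x0: "x0 \<in> sphere (0::real^'k) 1" "\<And>y. y \<in> sphere 0 1 \<Longrightarrow> N x0 \<le> N y"
    using continuous_attains_inf[OF compact_sphere ne vn_cont[OF N]] by blast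
  have "x0 \<noteq> 0" using x0(1) by auto
  then have pos: "N x0 > 0" by (rule vn_pos[OF N])
  have "N x0 * norm x \<le> N x" for x
  proof (cases "x = 0")
    case True then show ?thesis by (simp add: vn_zero[OF N])
  next
    case False
    then have "(1 / norm x) *\<^sub>R x \<in> sphere 0 1" by simp
    then have "N x0 \<le> N ((1 / norm x) *\<^sub>R x)" by (rule x0(2))
    also have "\<dots> = N x / norm x" by (simp add: vn_scale[OF N])
    finally show ?thesis using False by (simp add: field_simps)
  qed
  then show ?thesis using pos by blast
qed

lemma ind_bdd:
  fixes N :: "real^'k \<Rightarrow> real"
  assumes N: "is_vnorm N"
  shows "bdd_above ((\<lambda>x. N (x v* A) / N x) ` (-{0}))"
proof -
  obtain C where C: "C \<ge> 0" "\<And>x. N x \<le> C * norm x" using vn_upper[OF N] by blast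
  obtain c where c: "c > 0" "\<And>x. c * norm x \<le> N x" using vn_lower[OF N] by blast
  have bl: "bounded_linear (\<lambda>x. x v* A)"
  proof -
    have "(\<lambda>x. x v* A) = (*v) (transpose A)" by (simp add: fun_eq_iff)
    then show ?thesis by simp
  qed
  obtain K where K: "K > 0" "\<And>x. norm (x v* A) \<le> norm x * K"
    using bounded_linear.pos_bounded[OF bl] by blast
  show ?thesis
  proof (rule bdd_aboveI2)
    fix x :: "real^'k" assume "x \<in> -{0}"
    then have x: "x \<noteq> 0" by auto
    have Nx: "N x > 0" using vn_pos[OF N x] .
    have "N (x v* A) \<le> C * (norm x * K)"
      using C(2)[of "x v* A"] K(2)[of x] C(1) by (meson mult_left_mono order_trans)
    also have "\<dots> \<le> C * K / c * N x"
      using c(2)[of x] c(1) C(1) K(1) by (simp add: field_simps mult_left_mono)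
    finally show "N (x v* A) / N x \<le> C * K / c" using Nx by (simp add: divide_le_eq)
  qed
qed

lemma ind_bound:
  fixes N :: "real^'k \<Rightarrow> real"
  assumes N: "is_vnorm N"
  shows "N (x v* A) \<le> ind_norm N A * N x"
proof (cases "x = 0")
  case True then show ?thesis by (simp add: vn_zero[OF N])
next
  case False
  have "N (x v* A) / N x \<le> ind_norm N A"
    unfolding ind_norm_def by (rule cSUP_upper[OF _ ind_bdd[OF N]]) (use False in auto)
  then show ?thesis using vn_pos[OF N False] by (simp add: divide_le_eq)
qed

lemma ind_nn:
  fixes N :: "real^'k \<Rightarrow> real"
  assumes N: "is_vnorm N"
  shows "0 \<le> ind_norm N A"
proof -
  obtain x :: "real^'k" where x: "x \<noteq> 0" using norm_axis_1[of undefined] by (metis norm_zero zero_neq_one)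
  have "0 \<le> N (x v* A) / N x" using vn_nn[OF N] by simp
  also have "N (x v* A) / N x \<le> ind_norm N A"
    unfolding ind_norm_def by (rule cSUP_upper[OF _ ind_bdd[OF N]]) (use x in auto)
  finally show ?thesis .
qed

lemma mvt_N:
  fixes F :: "real^'k \<Rightarrow> real^'k" and J :: "real^'k \<Rightarrow> real^'k^'k"
  assumes N: "is_vnorm N"
    and F_deriv: "\<And>x. (F has_derivative (\<lambda>h. h v* J x)) (at x)"
    and bd: "\<And>z. ind_norm N (J z - J x) \<le> \<gamma>"
  shows "N (F (x + h) - F x - h v* J x) \<le> \<gamma> * N h"
proof (rule ccontr)
  define r where "r = \<gamma> * N h"
  define S where "S = {v. N v \<le> r}"
  define z where "z = F (x + h) - F x - h v* J x"
  assume "\<not> ?thesis"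
  then have zS: "z \<notin> S" unfolding S_def z_def r_def by auto
  have cS: "convex S" unfolding S_def convex_def
  proof (intro allI ballI impI, clarsimp)
    fix u v :: "real^'k" and a b :: real
    assume u: "N u \<le> r" and v: "N v \<le> r" and a: "0 \<le> a" and b: "0 \<le> b" and ab: "a + b = 1"
    have "N (a *\<^sub>R u + b *\<^sub>R v) \<le> a * N u + b * N v"
      using vn_tri[OF N, of "a *\<^sub>R u" "b *\<^sub>R v"] vn_scale[OF N] a b by simp
    also have "\<dots> \<le> a * r + b * r" using u v a b by (intro add_mono mult_left_mono) auto
    also have "\<dots> = (a + b) * r" by (simp add: distrib_right)
    finally show "N (a *\<^sub>R u + b *\<^sub>R v) \<le> r" using ab by simp
  qed
  have clS: "closed S" unfolding S_def
    by (rule closed_Collect_le[OF vn_cont[OF N] continuous_on_const])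
  obtain a b where ab: "inner a z < b" "\<And>v. v \<in> S \<Longrightarrow> inner a v > b"
    using separating_hyperplane_closed_point[OF cS clS zS] by blast
  define \<phi> where "\<phi> t = inner a (F (x + t *\<^sub>R h) - t *\<^sub>R (h v* J x))" for t
  define D where "D t = inner a (h v* (J (x + t *\<^sub>R h) - J x))" for t
  have der: "DERIV \<phi> t :> D t" for t
  proof -
    have g: "((\<lambda>t. x + t *\<^sub>R h) has_derivative (\<lambda>s. s *\<^sub>R h)) (at t)"
      by (auto intro!: derivative_eq_intros)
    have c: "((F \<circ> (\<lambda>t. x + t *\<^sub>R h)) has_derivative ((\<lambda>k. k v* J (x + t *\<^sub>R h)) \<circ> (\<lambda>s. s *\<^sub>R h))) (at t)"
      by (rule diff_chain_at[OF g F_deriv])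
    have c2: "((\<lambda>t. F (x + t *\<^sub>R h) - t *\<^sub>R (h v* J x)) has_derivative
        (\<lambda>s. (s *\<^sub>R h) v* J (x + t *\<^sub>R h) - s *\<^sub>R (h v* J x))) (at t)"
      using c by (auto simp: o_def intro!: derivative_eq_intros)
    have c3: "(\<phi> has_derivative (\<lambda>s. inner a ((s *\<^sub>R h) v* J (x + t *\<^sub>R h) - s *\<^sub>R (h v* J x)))) (at t)"
      unfolding \<phi>_def by (rule has_derivative_inner_right[OF c2])
    show ?thesis unfolding has_field_derivative_def
      by (rule has_derivative_eq_rhs[OF c3])
        (simp add: fun_eq_iff D_def scaleR_vector_matrix_assoc inner_diff_right
           vector_matrix_mult_diff_distrib[symmetric] algebra_simps)
  qed
  obtain s where s: "0 < s" "s < 1" "\<phi> 1 - \<phi> 0 = (1 - 0) * D s"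
    using MVT2[of 0 1 \<phi> D] der by auto
  have "\<phi> 1 - \<phi> 0 = inner a z"
    unfolding \<phi>_def z_def by (simp add: inner_diff_right)
  moreover have "h v* (J (x + s *\<^sub>R h) - J x) \<in> S"
    unfolding S_def r_def using ind_bound[OF N, of h "J (x + s *\<^sub>R h) - J x"] bd[of "x + s *\<^sub>R h"]
      vn_nn[OF N, of h] by (simp add: mult_right_mono order_trans)
  ultimately show False using ab s(3) unfolding D_def by force
qed

lemma J_inv:
  fixes F :: "real^'k \<Rightarrow> real^'k" and J :: "real^'k \<Rightarrow> real^'k^'k"
  assumes bij: "bij F"
    and F_deriv: "\<And>x. (F has_derivative (\<lambda>h. h v* J x)) (at x)"
    and Finv_C1: "\<exists>Jg :: real^'k \<Rightarrow> real^'k^'k.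
        (\<forall>y. (inv F has_derivative (\<lambda>h. h v* Jg y)) (at y)) \<and> continuous_on UNIV Jg"
  shows "J x ** matrix_inv (J x) = mat 1 \<and> matrix_inv (J x) ** J x = mat 1"
proof -
  obtain Jg :: "real^'k \<Rightarrow> real^'k^'k" where Jg: "\<And>y. (inv F has_derivative (\<lambda>h. h v* Jg y)) (at y)"
    using Finv_C1 by blast
  have d1: "((inv F \<circ> F) has_derivative ((\<lambda>h. h v* Jg (F x)) \<circ> (\<lambda>h. h v* J x))) (at x)"
    by (rule diff_chain_at[OF F_deriv Jg])
  have "inv F \<circ> F = id" using bij by (simp add: bij_is_inj)
  then have d2: "((inv F \<circ> F) has_derivative id) (at x)" by (simp add: has_derivative_ident)
  have eq: "(\<lambda>h. h v* Jg (F x)) \<circ> (\<lambda>h. h v* J x) = id"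
    by (rule has_derivative_unique[OF d1 d2])
  define M where "M = J x ** Jg (F x)"
  have "\<forall>h. transpose M *v h = transpose (mat 1) *v h"
  proof
    fix h :: "real^'k"
    have "h v* M = h" using fun_cong[OF eq, of h] unfolding M_def by (simp add: vector_matrix_mul_assoc)
    then show "transpose M *v h = transpose (mat 1) *v h" by simp
  qed
  then have "transpose M = transpose (mat 1 :: real^'k^'k)" using matrix_eq by blast
  then have M1: "J x ** Jg (F x) = mat 1" unfolding M_def by (metis transpose_transpose)
  then have M2: "Jg (F x) ** J x = mat 1" using matrix_left_right_inverse by blast
  have "\<exists>A'. J x ** A' = mat 1 \<and> A' ** J x = mat 1" using M1 M2 by blast
  then show ?thesis unfolding matrix_inv_def by (rule someI_ex)
qed

lemma vm_sum: "(\<Sum>i\<in>A. f i) v* (T::real^'k^'k) = (\<Sum>i\<in>A. f i v* T)"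
proof -
  have "(\<Sum>i\<in>A. f i) v* T = transpose T *v (\<Sum>i\<in>A. f i)" by simp
  also have "\<dots> = (\<Sum>i\<in>A. transpose T *v f i)"
    using linear_sum[OF matrix_vector_mul_linear[of "transpose T"], of f A] by (simp add: o_def)
  finally show ?thesis by simp
qed

lemma vm_neg: "(- v) v* (A::real^'k^'k) = - (v v* A)"
  using vector_matrix_mult_diff_distrib[of 0 v A] by simp

lemma rowmean_step:
  fixes Y A :: "real^'k^'m"
  shows "rowmean (ii_step F Y A) = rowmean A - (rowmean (mapF F A) - rowmean Y) v* theta F A"
proof -
  define T where "T = theta F A"
  define b where "b = offset F A"
  have "rowmean (ii_step F Y A) = (1 / real CARD('m)) *\<^sub>R (\<Sum>i\<in>UNIV. Y $ i v* T + b)"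
    unfolding rowmean_def ii_step_def T_def b_def by simp
  also have "(\<Sum>i\<in>UNIV. Y $ i v* T + b) = (\<Sum>i\<in>UNIV. Y $ i) v* T + real CARD('m) *\<^sub>R b"
    by (simp add: sum.distrib vm_sum scaleR_conv_of_real)
  finally have "rowmean (ii_step F Y A) = rowmean Y v* T + b"
    unfolding rowmean_def by (simp add: scaleR_vector_matrix_assoc scaleR_add_right)
  then show ?thesis unfolding b_def offset_def T_def
    by (simp add: vector_matrix_mult_diff_distrib algebra_simps)
qed

theorem theorem2:
  fixes F :: "real^'k \<Rightarrow> real^'k"
    and J :: "real^'k \<Rightarrow> real^'k^'k"
    and N :: "real^'k \<Rightarrow> real"
    and Y :: "real^'k^'m"
    and X :: "nat \<Rightarrow> real^'k^'m"
    and \<gamma> \<zeta> \<beta> lam \<delta> \<mu> \<rho> :: real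
  assumes bij: "bij F"
    and F_deriv: "\<And>x. (F has_derivative (\<lambda>h. h v* J x)) (at x)"
    and J_cont: "continuous_on UNIV J"
    and Finv_C1: "\<exists>Jg :: real^'k \<Rightarrow> real^'k^'k.
        (\<forall>y. (inv F has_derivative (\<lambda>h. h v* Jg y)) (at y)) \<and> continuous_on UNIV Jg"
    and N: "is_vnorm N"
    and gamma: "\<And>x1 x2. ind_norm N (J x1 - J x2) \<le> \<gamma>"
    and zeta: "\<And>x. ind_norm N (J x) \<le> \<zeta>"
    and beta: "\<And>x. ind_norm N (matrix_inv (J x)) \<le> \<beta>"
    and iter: "\<And>n. X (Suc n) = ii_step F Y (X n)"
    and lam_bd: "\<And>n. N (rowmean (mapF F (X n)) - F (rowmean (X n))) \<le> lam"
    and Delta: "\<And>n. \<exists>\<Delta>. theta F (X n) = matrix_inv (J (rowmean (X n))) ** (mat 1 + \<Delta>)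
                         \<and> ind_norm N \<Delta> \<le> \<delta>"
    and delta: "\<delta> < 1 / (\<zeta> * \<beta>)"
    and mu: "\<mu> = \<zeta>^2 * \<beta> * \<delta> / (1 - \<zeta> * \<beta> * \<delta>)"
    and contr: "\<beta> * (1 + \<delta>) * (\<gamma> + \<mu>) < 1"
    and rho: "\<rho> = 2 * lam * \<beta> * (1 + \<delta>) * (\<mu> + \<zeta>) / (1 - \<beta> * (1 + \<delta>) * (\<mu> + \<gamma>))"
  shows "\<forall>\<epsilon>>0. \<exists>k. N (rowmean (mapF F (X k)) - rowmean Y) \<le> \<rho> + \<epsilon>"
proof -
  define xb where "xb n = rowmean (X n)" for n
  define fb where "fb n = rowmean (mapF F (X n))" for n
  define yb where "yb = rowmean Y"
  define e where "e n = fb n - yb" for n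
  define a where "a n = N (e n)" for n
  obtain Dl where Dl: "\<And>n. theta F (X n) = matrix_inv (J (xb n)) ** (mat 1 + Dl n) \<and> ind_norm N (Dl n) \<le> \<delta>"
    using choice[of "\<lambda>n D. theta F (X n) = matrix_inv (J (xb n)) ** (mat 1 + D) \<and> ind_norm N D \<le> \<delta>"]
      Delta unfolding xb_def by blast
  have inv: "\<And>x. J x ** matrix_inv (J x) = mat 1 \<and> matrix_inv (J x) ** J x = mat 1"
    by (rule J_inv[OF bij F_deriv Finv_C1])
  have g0: "0 \<le> \<gamma>" using gamma[of 0 0] ind_nn[OF N] by (meson order_trans)
  have z0: "0 \<le> \<zeta>" using zeta[of 0] ind_nn[OF N] by (meson order_trans)
  have b0: "0 \<le> \<beta>" using beta[of 0] ind_nn[OF N] by (meson order_trans)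
  have d0: "0 \<le> \<delta>" using Dl[of 0] ind_nn[OF N] by (meson order_trans)
  have l0: "0 \<le> lam" using lam_bd[of 0] vn_nn[OF N] by (meson order_trans)
  have a0: "\<And>n. 0 \<le> a n" unfolding a_def using vn_nn[OF N] by simp
  have zb1: "1 \<le> \<zeta> * \<beta>"
  proof -
    define x0 where "x0 = (axis undefined 1 :: real^'k)"
    have x0: "x0 \<noteq> 0" unfolding x0_def by (metis norm_axis_1 norm_zero zero_neq_one)
    have "N x0 = N ((x0 v* matrix_inv (J 0)) v* J 0)"
      using inv[of 0] by (simp add: vector_matrix_mul_assoc)
    also have "\<dots> \<le> \<zeta> * N (x0 v* matrix_inv (J 0))"
      using ind_bound[OF N] zeta vn_nn[OF N] by (meson mult_right_mono order_trans)
    also have "\<dots> \<le> \<zeta> * (\<beta> * N x0)"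
      using ind_bound[OF N] beta vn_nn[OF N] z0 by (meson mult_left_mono mult_right_mono order_trans)
    finally have "1 * N x0 \<le> (\<zeta> * \<beta>) * N x0" by simp
    then show ?thesis using vn_pos[OF N x0] by (meson mult_le_cancel_right_pos)
  qed
  define q where "q = \<beta> * (1 + \<delta>) * \<gamma> + \<zeta> * (\<delta> * \<beta>)"
  have q0: "0 \<le> q" unfolding q_def using g0 z0 b0 d0 by simp
  have step: "a (Suc n) \<le> 2 * lam + q * a n" for n
  proof -
    define x where "x = xb n"
    define Ji where "Ji = matrix_inv (J x)"
    define D where "D = Dl n"
    define T where "T = theta F (X n)"
    define h where "h = - (e n v* T)"
    have T: "T = Ji ** (mat 1 + D)" unfolding T_def Ji_def D_def x_def using Dl by blast
    have ND: "\<And>v. N (v v* D) \<le> \<delta> * N v"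
      using ind_bound[OF N] Dl vn_nn[OF N] unfolding D_def by (meson mult_right_mono order_trans)
    have NJi: "\<And>v. N (v v* Ji) \<le> \<beta> * N v"
      using ind_bound[OF N] beta vn_nn[OF N] unfolding Ji_def by (meson mult_right_mono order_trans)
    have NJ: "\<And>v. N (v v* J x) \<le> \<zeta> * N v"
      using ind_bound[OF N] zeta vn_nn[OF N] by (meson mult_right_mono order_trans)
    have xs: "xb (Suc n) = x + h"
      unfolding xb_def x_def h_def iter rowmean_step e_def fb_def yb_def T_def by simp
    have JiJ: "Ji ** J x = mat 1" unfolding Ji_def using inv by blast
    have hT: "(e n v* T) v* J x = e n + ((e n v* Ji) v* D) v* J x"
    proof -
      have "(e n v* T) v* J x = ((e n v* Ji) v* (mat 1 + D)) v* J x"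
        unfolding T by (simp add: vector_matrix_mul_assoc)
      also have "\<dots> = (e n v* Ji) v* J x + ((e n v* Ji) v* D) v* J x"
        by (simp add: vector_matrix_mult_add_rdistrib vector_matrix_left_distrib)
      also have "(e n v* Ji) v* J x = e n" using JiJ by (simp add: vector_matrix_mul_assoc)
      finally show ?thesis .
    qed
    have dec: "e (Suc n) = (fb (Suc n) - F (xb (Suc n))) + (F (x + h) - F x - h v* J x)
        + (- (fb n - F x)) + (- (((e n v* Ji) v* D) v* J x))"
    proof -
      have hJ: "h v* J x = - (e n + ((e n v* Ji) v* D) v* J x)"
        unfolding h_def using hT vm_neg by metis
      show ?thesis unfolding xs hJ e_def by (simp add: algebra_simps)
    qed
    have N1: "N (fb (Suc n) - F (xb (Suc n))) \<le> lam" using lam_bd unfolding fb_def xb_def by blast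
    have N2: "N (F (x + h) - F x - h v* J x) \<le> \<gamma> * N h"
      by (rule mvt_N[OF N F_deriv gamma])
    have N3: "N (- (fb n - F x)) \<le> lam" using lam_bd vn_neg[OF N] unfolding fb_def x_def xb_def by metis
    have N4: "N (- (((e n v* Ji) v* D) v* J x)) \<le> \<zeta> * (\<delta> * (\<beta> * a n))"
    proof -
      have "N (- (((e n v* Ji) v* D) v* J x)) \<le> \<zeta> * N ((e n v* Ji) v* D)"
        using NJ vn_neg[OF N] by metis
      also have "\<dots> \<le> \<zeta> * (\<delta> * N (e n v* Ji))" using ND z0 by (simp add: mult_left_mono)
      also have "\<dots> \<le> \<zeta> * (\<delta> * (\<beta> * a n))" unfolding a_def
        using NJi z0 d0 by (simp add: mult_left_mono)
      finally show ?thesis .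
    qed
    have Nh: "N h \<le> \<beta> * (1 + \<delta>) * a n"
    proof -
      have "e n v* T = e n v* Ji + (e n v* Ji) v* D"
        unfolding T by (simp add: vector_matrix_mul_assoc[symmetric] vector_matrix_mult_add_rdistrib)
      then have "N h \<le> N (e n v* Ji) + N ((e n v* Ji) v* D)"
        unfolding h_def using vn_neg[OF N] vn_tri[OF N] by metis
      also have "\<dots> \<le> N (e n v* Ji) + \<delta> * N (e n v* Ji)" using ND by simp
      also have "\<dots> = (1 + \<delta>) * N (e n v* Ji)" by (simp add: algebra_simps)
      also have "\<dots> \<le> (1 + \<delta>) * (\<beta> * a n)" unfolding a_def using NJi d0 by (simp add: mult_left_mono)
      finally show ?thesis by (simp add: algebra_simps)
    qed
    have "a (Suc n) \<le> N (fb (Suc n) - F (xb (Suc n))) + N (F (x + h) - F x - h v* J x)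
        + N (- (fb n - F x)) + N (- (((e n v* Ji) v* D) v* J x))"
      unfolding a_def dec using vn_tri[OF N] by (meson add_mono order_trans order_refl)
    also have "\<dots> \<le> lam + \<gamma> * (\<beta> * (1 + \<delta>) * a n) + lam + \<zeta> * (\<delta> * (\<beta> * a n))"
      using N1 N2 N3 N4 Nh g0 by (meson add_mono mult_left_mono order_trans)
    also have "\<dots> = 2 * lam + q * a n" unfolding q_def by (simp add: algebra_simps)
    finally show ?thesis .
  qed
  define sv where "sv = \<zeta> * \<beta> * \<delta>"
  have zbpos: "0 < \<zeta> * \<beta>" using zb1 by simp
  have sv1: "sv < 1"
  proof -
    have "\<delta> * (\<zeta> * \<beta>) < 1" using delta zbpos by (simp add: pos_less_divide_eq)
    then show ?thesis unfolding sv_def by (simp add: algebra_simps)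
  qed
  have sv0: "0 \<le> sv" unfolding sv_def using z0 b0 d0 by simp
  have mu': "\<mu> = \<zeta> * (sv / (1 - sv))" unfolding mu sv_def by (simp add: power2_eq_square algebra_simps)
  have r0: "0 \<le> sv / (1 - sv)" using sv0 sv1 by simp
  have r1: "sv \<le> sv / (1 - sv)" using sv0 sv1 by (simp add: le_divide_eq mult_left_le)
  have mu0: "0 \<le> \<mu>" unfolding mu' using z0 r0 by (rule mult_nonneg_nonneg)
  have bmu: "sv / (1 - sv) \<le> \<beta> * \<mu>"
  proof -
    have "1 * (sv / (1 - sv)) \<le> (\<zeta> * \<beta>) * (sv / (1 - sv))" using zb1 r0 by (rule mult_right_mono)
    then show ?thesis unfolding mu' by (simp add: algebra_simps)
  qed
  have bdmu: "\<beta> * \<mu> \<le> \<beta> * (1 + \<delta>) * \<mu>"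
  proof -
    have "\<beta> * (1 + \<delta>) * \<mu> = \<beta> * \<mu> + \<delta> * (\<beta> * \<mu>)" by (simp add: algebra_simps)
    moreover have "0 \<le> \<delta> * (\<beta> * \<mu>)" using d0 b0 mu0 by simp
    ultimately show ?thesis by linarith
  qed
  define Q where "Q = \<beta> * (1 + \<delta>) * (\<gamma> + \<mu>)"
  define P where "P = \<beta> * (1 + \<delta>) * (\<mu> + \<zeta>)"
  have qQ: "q \<le> Q"
  proof -
    have "\<zeta> * (\<delta> * \<beta>) = sv" unfolding sv_def by (simp add: algebra_simps)
    moreover have "Q = \<beta> * (1 + \<delta>) * \<gamma> + \<beta> * (1 + \<delta>) * \<mu>" unfolding Q_def by (simp add: algebra_simps)
    ultimately show ?thesis unfolding q_def using r1 bmu bdmu by linarith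
  qed
  have Q1: "Q < 1" unfolding Q_def using contr .
  have P1: "1 \<le> P"
  proof -
    have "P = \<zeta> * \<beta> + (\<beta> * \<delta> * \<zeta> + \<beta> * (1 + \<delta>) * \<mu>)" unfolding P_def by (simp add: algebra_simps)
    moreover have "0 \<le> \<beta> * \<delta> * \<zeta>" using b0 d0 z0 by simp
    moreover have "0 \<le> \<beta> * (1 + \<delta>) * \<mu>" using b0 d0 mu0 by simp
    ultimately show ?thesis using zb1 by linarith
  qed
  define L where "L = 2 * lam / (1 - q)"
  have q1: "q < 1" using qQ Q1 by linarith
  have L0: "0 \<le> L" unfolding L_def using l0 q1 by simp
  have Lfix: "2 * lam + q * L = L" unfolding L_def using q1 by (simp add: field_simps)
  have Lrho: "L \<le> \<rho>"
  proof -
    have "L \<le> 2 * lam / (1 - Q)" unfolding L_def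
      by (rule divide_left_mono) (use l0 qQ Q1 q1 in auto)
    also have "\<dots> \<le> 2 * lam * P / (1 - Q)"
      by (rule divide_right_mono) (use l0 P1 Q1 in \<open>auto simp: mult_le_cancel_left1\<close>)
    also have "\<dots> = \<rho>" unfolding rho P_def Q_def by (simp add: algebra_simps)
    finally show ?thesis .
  qed
  have ind: "a n \<le> L + q ^ n * a 0" for n
  proof (induction n)
    case 0 then show ?case using L0 by simp
  next
    case (Suc n)
    have "a (Suc n) \<le> 2 * lam + q * a n" by (rule step)
    also have "\<dots> \<le> 2 * lam + q * (L + q ^ n * a 0)" using Suc q0 by (simp add: mult_left_mono)
    also have "\<dots> = L + q ^ Suc n * a 0" using Lfix by (simp add: algebra_simps)
    finally show ?case .
  qed
  show ?thesis
  proof (intro allI impI)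
    fix \<epsilon> :: real assume ep: "\<epsilon> > 0"
    obtain n where n: "q ^ n < \<epsilon> / (a 0 + 1)"
      using real_arch_pow_inv[of "\<epsilon> / (a 0 + 1)" q] ep a0[of 0] q1 by auto
    have "q ^ n * a 0 \<le> \<epsilon> / (a 0 + 1) * a 0" using n a0[of 0] by (intro mult_right_mono) auto
    also have "\<dots> \<le> \<epsilon>" using ep a0[of 0] by (simp add: field_simps)
    finally have "a n \<le> \<rho> + \<epsilon>" using ind[of n] Lrho by linarith
    then show "\<exists>k. N (rowmean (mapF F (X k)) - rowmean Y) \<le> \<rho> + \<epsilon>"
      unfolding a_def e_def fb_def yb_def by blast
  qed
qed

end
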